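(* Let $h=(h_1,\dots,h_n):\mathbb C\to\mathbb R^n$ be a branched minimal immersion, write $\frac{\partial h_i}{\partial z}(z)=\sum_{j=0}^\infty c^i_jz^j$ and $c_j=(c^1_j,\dots,c^n_j)\in\mathbb C^n$. Then $h$ is holomorphic up to a rigid motion if and only if $g(c_m,c_k)=0$ for all integers $m,k\geq0$, where $g(u,v)=\sum_{i=1}^n u_iv_i$ is the standard complex bilinear form on $\mathbb C^n$.
   Context: A branched minimal immersion is a nonconstant smooth map that is harmonic and conformal. $h$ is holomorphic up to a rigid motion if its image lies in an even-dimensional affine subspace $b+W\subset\mathbb R^n$ and there is a linear $J:W\to W$ with $J^2=-I$ preserving the Euclidean inner product such that $dh\circ j=J\circ dh$, $j$ the standard complex structure on $\mathbb C$ (equivalently $Jh_x=h_y$, $Jh_y=-h_x$). *)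

theory Defs
  imports "HOL-Analysis.Analysis"
begin

definition pd :: "bool \<Rightarrow> (complex \<Rightarrow> 'a::real_normed_vector) \<Rightarrow> complex \<Rightarrow> 'a" where
  "pd d f z = frechet_derivative f (at z) (if d then \<i> else 1)"

abbreviation hx where "hx f \<equiv> pd False f"
abbreviation hy where "hy f \<equiv> pd True f"

fun iter_pd :: "bool list \<Rightarrow> (complex \<Rightarrow> 'a::real_normed_vector) \<Rightarrow> complex \<Rightarrow> 'a" where
  "iter_pd [] f = f"
| "iter_pd (d # ds) f = pd d (iter_pd ds f)"

definition smooth_map :: "(complex \<Rightarrow> 'a::real_normed_vector) \<Rightarrow> bool" where
  "smooth_map f \<longleftrightarrow> (\<forall>ds z. iter_pd ds f differentiable (at z))"

definition harmonic_map :: "(complex \<Rightarrow> 'a::real_normed_vector) \<Rightarrow> bool" where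
  "harmonic_map f \<longleftrightarrow> (\<forall>z. hx (hx f) z + hy (hy f) z = 0)"

definition conformal_map :: "(complex \<Rightarrow> 'a::real_inner) \<Rightarrow> bool" where
  "conformal_map f \<longleftrightarrow> (\<forall>z. norm (hx f z) = norm (hy f z) \<and> inner (hx f z) (hy f z) = 0)"

definition branched_minimal_immersion :: "(complex \<Rightarrow> 'a::real_inner) \<Rightarrow> bool" where
  "branched_minimal_immersion f \<longleftrightarrow>
     (\<exists>z w. f z \<noteq> f w) \<and> smooth_map f \<and> harmonic_map f \<and> conformal_map f"

definition holomorphic_up_to_rigid_motion :: "(complex \<Rightarrow> 'a::euclidean_space) \<Rightarrow> bool" where
  "holomorphic_up_to_rigid_motion f \<longleftrightarrow>
     (\<exists>b W J. subspace W \<and> even (dim W) \<and> (\<forall>z. f z - b \<in> W) \<and>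
        linear J \<and> J ` W \<subseteq> W \<and> (\<forall>w\<in>W. J (J w) = - w) \<and>
        (\<forall>u\<in>W. \<forall>v\<in>W. inner (J u) (J v) = inner u v) \<and>
        (\<forall>z. J (hx f z) = hy f z \<and> J (hy f z) = - hx f z))"

definition dz :: "(complex \<Rightarrow> real ^ 'n) \<Rightarrow> complex \<Rightarrow> complex ^ 'n" where
  "dz f z = (\<chi> i. (complex_of_real (hx f z $ i) - \<i> * complex_of_real (hy f z $ i)) / 2)"

definition gC :: "complex ^ 'n \<Rightarrow> complex ^ 'n \<Rightarrow> complex" where
  "gC u v = (\<Sum>i\<in>UNIV. u $ i * v $ i)"

end

theory Submission
  imports Defs "HOL-Complex_Analysis.Complex_Analysis"
begin


lemma powser_coeffs_zero:
  fixes a :: "nat \<Rightarrow> complex"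
  assumes "\<And>z. (\<lambda>j. a j * z ^ j) sums 0"
  shows "a m = 0"
proof (cases "m = 0")
  case True
  have "(\<Sum>j. a j * 0 ^ j) = 0" using assms[of 0] sums_unique by metis
  then show ?thesis using True by (simp only: powser_zero)
next
  case False
  show ?thesis
  proof (rule ccontr)
    assume "a m \<noteq> 0"
    show False
    proof (rule powser_0_nonzero[of 1 0 a "\<lambda>_. 0" m])
      show "(0::real) < 1" by simp
      show "\<And>x. norm (x - 0) < 1 \<Longrightarrow> (\<lambda>n. a n * (x - 0) ^ n) sums (\<lambda>_. 0) x"
        using assms by simp
    next
      fix s :: real assume s: "0 < s" "\<And>z::complex. z \<in> cball 0 s - {0} \<Longrightarrow> (\<lambda>_. 0::complex) z \<noteq> 0"
      have "complex_of_real s \<in> cball 0 s - {0}" using s(1) by auto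
      then show False using s(2)[of "complex_of_real s"] by auto
    qed (use False \<open>a m \<noteq> 0\<close> in auto)
  qed
qed

lemma even_dim_cs:
  fixes W :: "'a::euclidean_space set"
  assumes "subspace W" "linear J" "J ` W \<subseteq> W" "\<forall>w\<in>W. J (J w) = - w"
    "\<forall>u\<in>W. \<forall>v\<in>W. J u \<bullet> J v = u \<bullet> v"
  shows "even (dim W)"
  using assms
proof (induction "dim W" arbitrary: W rule: less_induct)
  case less
  show ?case
  proof (cases "W \<subseteq> {0}")
    case True
    then have "dim W = 0" using dim_eq_0 by blast
    then show ?thesis by (metis even_zero)
  next
    case False
    then obtain w where w: "w \<in> W" "w \<noteq> 0" by auto
    have Jw: "J w \<in> W" using less w by auto
    have JJw: "J (J w) = - w" using less w by auto
    have ww: "J w \<bullet> J w = w \<bullet> w" using less w by auto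
    have wJw: "w \<bullet> J w = 0"
    proof -
      have "J w \<bullet> J (J w) = w \<bullet> J w" using less(6) w Jw by blast
      then have "- (J w \<bullet> w) = w \<bullet> J w" using JJw by simp
      then show ?thesis by (simp add: inner_commute)
    qed
    have wpos: "w \<bullet> w > 0" using w by simp
    define W' where "W' = {x\<in>W. x \<bullet> w = 0 \<and> x \<bullet> J w = 0}"
    have sW': "subspace W'" unfolding W'_def using less(2)
      by (auto simp: subspace_def inner_add_left)
    have JW': "J ` W' \<subseteq> W'"
    proof
      fix y assume "y \<in> J ` W'"
      then obtain x where x: "x \<in> W'" "y = J x" by auto
      have xW: "x \<in> W" "J x \<in> W" using x less unfolding W'_def by auto
      have "J (J x) \<bullet> J w = J x \<bullet> w" using less xW w by auto
      then have 1: "J x \<bullet> w = 0" using x less xW unfolding W'_def by auto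
      have "J x \<bullet> J w = x \<bullet> w" using less xW w by auto
      then show "y \<in> W'" using 1 x xW unfolding W'_def by auto
    qed
    have sub: "W' \<subseteq> W" unfolding W'_def by auto
    have Wspan: "W = span (W' \<union> {w, J w})"
    proof
      show "span (W' \<union> {w, J w}) \<subseteq> W"
        using sub w Jw less(2) by (simp add: span_minimal)
      show "W \<subseteq> span (W' \<union> {w, J w})"
      proof
        fix x assume x: "x \<in> W"
        define al where "al = (x \<bullet> w) / (w \<bullet> w)"
        define be where "be = (x \<bullet> J w) / (w \<bullet> w)"
        define x' where "x' = x - al *\<^sub>R w - be *\<^sub>R J w"
        have "x' \<in> W" unfolding x'_def using x w Jw less(2)
          by (simp add: subspace_diff subspace_scale)
        moreover have "x' \<bullet> w = 0"
        proof -
          have "x' \<bullet> w = x \<bullet> w - al * (w \<bullet> w) - be * (J w \<bullet> w)"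
            unfolding x'_def by (simp add: inner_diff_left)
          then show ?thesis using wpos wJw by (simp add: al_def inner_commute)
        qed
        moreover have "x' \<bullet> J w = 0"
        proof -
          have "x' \<bullet> J w = x \<bullet> J w - al * (w \<bullet> J w) - be * (J w \<bullet> J w)"
            unfolding x'_def by (simp add: inner_diff_left)
          then show ?thesis using wpos wJw ww by (simp add: be_def)
        qed
        ultimately have "x' \<in> W'" unfolding W'_def by auto
        then have "x' \<in> span (W' \<union> {w, J w})" by (simp add: span_base)
        moreover have "w \<in> span (W' \<union> {w, J w})" "J w \<in> span (W' \<union> {w, J w})"
          by (auto intro: span_base)
        ultimately have "x' + al *\<^sub>R w + be *\<^sub>R J w \<in> span (W' \<union> {w, J w})"
          by (simp add: span_add span_scale)
        then show "x \<in> span (W' \<union> {w, J w})" unfolding x'_def by simp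
      qed
    qed
    have "dim (W' \<union> {w, J w}) = dim W' + dim {w, J w}"
      by (rule dim_orthogonal_sum) (auto simp: W'_def inner_commute)
    moreover have "dim {w, J w} = 2"
    proof -
      have ne: "w \<noteq> J w" using wJw wpos by auto
      have Jw0: "J w \<noteq> 0" using ww wpos by auto
      have "independent {w, J w}"
        by (rule pairwise_orthogonal_independent)
           (auto simp: pairwise_def orthogonal_def wJw inner_commute w Jw0)
      then show ?thesis using ne by (simp add: dim_eq_card_independent)
    qed
    ultimately have dW: "dim W = dim W' + 2" using Wspan by (metis dim_span)
    have "even (dim W')"
    proof (rule less(1))
      show "dim W' < dim W" using dW by simp
      show "subspace W'" by (rule sW')
      show "linear J" by (rule less(3))
      show "J ` W' \<subseteq> W'" by (rule JW')
      show "\<forall>w\<in>W'. J (J w) = - w" using less(5) sub by blast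
      show "\<forall>u\<in>W'. \<forall>v\<in>W'. J u \<bullet> J v = u \<bullet> v" using less(6) sub by blast
    qed
    then show ?thesis using dW by simp
  qed
qed



definition vRe :: "complex^'n \<Rightarrow> real^'n" where "vRe u = (\<chi> i. Re (u $ i))"
definition vIm :: "complex^'n \<Rightarrow> real^'n" where "vIm u = (\<chi> i. Im (u $ i))"
definition cm :: "complex \<Rightarrow> complex^'n \<Rightarrow> complex^'n" where "cm a u = (\<chi> i. a * u $ i)"

lemma gC_commute: "gC u v = gC v u"
  unfolding gC_def by (simp add: mult.commute)

lemma gC_add: "gC w (u + v) = gC w u + gC w v"
  unfolding gC_def by (simp add: distrib_left sum.distrib)

lemma gC_cm: "gC w (cm a u) = a * gC w u"
  unfolding gC_def cm_def by (simp add: sum_distrib_left algebra_simps)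

lemma gC_zero: "gC w 0 = 0"
  unfolding gC_def by simp

lemma gC_real: "gC u v = Complex (vRe u \<bullet> vRe v - vIm u \<bullet> vIm v) (vRe u \<bullet> vIm v + vIm u \<bullet> vRe v)"
  unfolding gC_def vRe_def vIm_def inner_vec_def
  by (simp add: complex_eq_iff Re_sum Im_sum sum.distrib sum_subtractf)

lemma vRe_add: "vRe (u + v) = vRe u + vRe v" by (simp add: vRe_def vec_eq_iff)
lemma vIm_add: "vIm (u + v) = vIm u + vIm v" by (simp add: vIm_def vec_eq_iff)
lemma vRe_cm_real: "vRe (cm (complex_of_real r) u) = r *\<^sub>R vRe u" by (simp add: vRe_def cm_def vec_eq_iff)
lemma vRe_cm_i: "vRe (cm \<i> u) = - vIm u" by (simp add: vRe_def vIm_def cm_def vec_eq_iff)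
lemma vIm_cm_i: "vIm (cm \<i> u) = vRe u" by (simp add: vRe_def vIm_def cm_def vec_eq_iff)
lemma vRe_zero: "vRe 0 = 0" by (simp add: vRe_def vec_eq_iff)
lemma cm_cm: "cm a (cm b u) = cm (a * b) u" by (simp add: cm_def vec_eq_iff)
lemma cm_add: "cm a (u + v) = cm a u + cm a v" by (simp add: cm_def vec_eq_iff algebra_simps)
lemma vRe_vIm_eq: "vRe u = vRe v \<Longrightarrow> vIm u = vIm v \<Longrightarrow> u = v"
  by (simp add: vRe_def vIm_def vec_eq_iff complex_eq_iff)

lemma sums_gC:
  fixes c :: "nat \<Rightarrow> complex ^ 'n"
  assumes "\<And>i. (\<lambda>j. c j $ i * z ^ j) sums (p $ i)"
  shows "(\<lambda>j. gC w (c j) * z ^ j) sums (gC w p)"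
proof -
  have "(\<lambda>j. \<Sum>i\<in>UNIV. w $ i * (c j $ i * z ^ j)) sums (\<Sum>i\<in>UNIV. w $ i * p $ i)"
    by (rule sums_sum) (intro sums_mult assms)
  moreover have "(\<lambda>j. \<Sum>i\<in>UNIV. w $ i * (c j $ i * z ^ j)) = (\<lambda>j. gC w (c j) * z ^ j)"
    unfolding gC_def by (simp add: sum_distrib_right mult.assoc)
  ultimately show ?thesis unfolding gC_def by simp
qed

lemma dz_re: "vRe (dz f z) = (1/2) *\<^sub>R hx f z"
  by (simp add: vRe_def dz_def vec_eq_iff)
lemma dz_im: "vIm (dz f z) = - (1/2) *\<^sub>R hy f z"
  by (simp add: vIm_def dz_def vec_eq_iff)

lemma orth_mem:
  fixes W :: "('a::euclidean_space) set"
  assumes "subspace W" "\<And>v. (\<forall>x\<in>W. v \<bullet> x = 0) \<Longrightarrow> v \<bullet> y = 0"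
  shows "y \<in> W"
proof -
  obtain a b where ab: "a \<in> span W" "\<And>w. w \<in> span W \<Longrightarrow> orthogonal b w" "y = a + b"
    using orthogonal_subspace_decomp_exists[of W y] by metis
  have "\<forall>x\<in>W. b \<bullet> x = 0" using ab(2) by (simp add: orthogonal_def span_base)
  then have "b \<bullet> y = 0" by (rule assms(2))
  moreover have "b \<bullet> a = 0" using ab(1,2) by (simp add: orthogonal_def)
  ultimately have "b \<bullet> b = 0" using ab(3) by (simp add: inner_add_right)
  then have "b = 0" by simp
  moreover have "a \<in> W" using ab(1) by (simp only: span_eq_iff[THEN iffD2, OF assms(1)])
  ultimately show ?thesis using ab by simp
qed

lemma deriv_decomp:
  fixes h :: "complex \<Rightarrow> 'a::real_normed_vector"
  assumes "h differentiable (at z)"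
  shows "(h has_derivative (\<lambda>t. Re t *\<^sub>R hx h z + Im t *\<^sub>R hy h z)) (at z)"
proof -
  let ?D = "frechet_derivative h (at z)"
  have d: "(h has_derivative ?D) (at z)" using assms frechet_derivative_works by blast
  have lin: "linear ?D" using d has_derivative_linear by blast
  have "?D t = Re t *\<^sub>R hx h z + Im t *\<^sub>R hy h z" for t
  proof -
    have "t = Re t *\<^sub>R 1 + Im t *\<^sub>R \<i>" by (simp add: complex_eq_iff)
    then have "?D t = ?D (Re t *\<^sub>R 1 + Im t *\<^sub>R \<i>)" by simp
    also have "\<dots> = Re t *\<^sub>R ?D 1 + Im t *\<^sub>R ?D \<i>"
      using lin by (simp add: linear_add linear_scale)
    finally show ?thesis by (simp add: pd_def)
  qed
  then have "?D = (\<lambda>t. Re t *\<^sub>R hx h z + Im t *\<^sub>R hy h z)" by auto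
  then show ?thesis using d by simp
qed

lemma const_in_W:
  fixes h :: "complex \<Rightarrow> 'a::euclidean_space"
  assumes "\<And>z. h differentiable (at z)" "subspace W"
    "\<And>z. hx h z \<in> W" "\<And>z. hy h z \<in> W"
  shows "h z - h 0 \<in> W"
proof (rule orth_mem[OF assms(2)])
  fix v assume v: "\<forall>x\<in>W. v \<bullet> x = 0"
  have "((\<lambda>t. v \<bullet> h t) has_derivative (\<lambda>t. 0)) (at x within UNIV)" for x
  proof -
    have "((\<lambda>t. v \<bullet> h t) has_derivative (\<lambda>t. v \<bullet> (Re t *\<^sub>R hx h x + Im t *\<^sub>R hy h x))) (at x)"
      by (intro has_derivative_inner_right deriv_decomp assms(1))
    moreover have "(\<lambda>t. v \<bullet> (Re t *\<^sub>R hx h x + Im t *\<^sub>R hy h x)) = (\<lambda>t. 0)"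
      using v assms(3,4) by (simp add: inner_add_right)
    ultimately show ?thesis by simp
  qed
  then obtain k where "\<forall>x\<in>UNIV. v \<bullet> h x = k"
    using has_derivative_zero_constant[of UNIV "\<lambda>t. v \<bullet> h t"] by auto
  then show "v \<bullet> (h z - h 0) = 0" by (simp add: inner_diff_right)
qed

lemma deriv_in_W:
  fixes h :: "complex \<Rightarrow> 'a::euclidean_space"
  assumes "\<And>z. h differentiable (at z)" "subspace W" "\<And>z. h z - b \<in> W"
  shows "hx h z \<in> W \<and> hy h z \<in> W"
proof -
  have "v \<bullet> hx h z = 0 \<and> v \<bullet> hy h z = 0" if v: "\<forall>x\<in>W. v \<bullet> x = 0" for v
  proof -
    have 1: "((\<lambda>t. v \<bullet> h t) has_derivative (\<lambda>t. v \<bullet> (Re t *\<^sub>R hx h z + Im t *\<^sub>R hy h z))) (at z)"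
      by (intro has_derivative_inner_right deriv_decomp assms(1))
    have "v \<bullet> h t = v \<bullet> b" for t
    proof -
      have "v \<bullet> (h t - b) = 0" using v assms(3) by blast
      then show ?thesis by (simp add: inner_diff_right)
    qed
    then have "(\<lambda>t. v \<bullet> h t) = (\<lambda>t. v \<bullet> b)" by auto
    then have 2: "((\<lambda>t. v \<bullet> h t) has_derivative (\<lambda>t. 0)) (at z)" by simp
    have "(\<lambda>t. v \<bullet> (Re t *\<^sub>R hx h z + Im t *\<^sub>R hy h z)) = (\<lambda>t. 0)"
      by (rule has_derivative_unique[OF 1 2])
    from fun_cong[OF this, of 1] fun_cong[OF this, of \<i>] show ?thesis
      by (simp add: inner_add_right)
  qed
  then show ?thesis using orth_mem[OF assms(2)] by blast
qed



lemma cm_neg: "cm (-1) u = - u" by (simp add: cm_def vec_eq_iff)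
lemma vIm_zero: "vIm 0 = 0" by (simp add: vIm_def vec_eq_iff)

lemma backward:
  fixes h :: "complex \<Rightarrow> real ^ 'n" and c :: "nat \<Rightarrow> complex ^ 'n"
  assumes diff: "\<And>z. h differentiable (at z)"
    and sm: "\<And>z i. (\<lambda>j. c j $ i * z ^ j) sums (dz h z $ i)"
    and iso: "\<forall>m k. gC (c m) (c k) = 0"
  shows "holomorphic_up_to_rigid_motion h"
proof -
  define V where "V = {u. \<forall>w. (\<forall>j. gC w (c j) = 0) \<longrightarrow> gC w u = 0}"
  have V_add: "u + v \<in> V" if "u \<in> V" "v \<in> V" for u v
    using that unfolding V_def by (simp add: gC_add)
  have V_cm: "cm a u \<in> V" if "u \<in> V" for a u
    using that unfolding V_def by (simp add: gC_cm)
  have V0: "0 \<in> V" unfolding V_def by (simp add: gC_zero)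
  have phiV: "dz h z \<in> V" for z
    unfolding V_def
  proof (intro CollectI allI impI)
    fix w assume w: "\<forall>j. gC w (c j) = 0"
    have "(\<lambda>j. gC w (c j) * z ^ j) sums (gC w (dz h z))"
      by (rule sums_gC) (rule sm)
    then have "(\<lambda>j. 0) sums (gC w (dz h z))" using w by simp
    then show "gC w (dz h z) = 0" using sums_zero sums_unique2 by blast
  qed
  have isoV: "gC u v = 0" if "u \<in> V" "v \<in> V" for u v
  proof -
    have "gC (c k) u = 0" for k using that(1) iso unfolding V_def by blast
    then have "\<forall>j. gC u (c j) = 0" by (simp add: gC_commute)
    then show ?thesis using that(2) unfolding V_def by blast
  qed
  have reinj: "u = u'" if "u \<in> V" "u' \<in> V" "vRe u = vRe u'" for u u'
  proof -
    define d where "d = u + cm (-1) u'"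
    have dV: "d \<in> V" unfolding d_def using that V_add V_cm by blast
    have dd: "d = u - u'" unfolding d_def cm_neg by simp
    have "vRe d = 0" using that(3) unfolding dd by (simp add: vRe_def vec_eq_iff)
    moreover have "gC d d = 0" using isoV dV by blast
    ultimately have "vIm d \<bullet> vIm d = 0" unfolding gC_real by (simp add: complex_eq_iff)
    then have "vIm d = 0" by simp
    then have "d = 0" using \<open>vRe d = 0\<close> vRe_vIm_eq[of d 0] vRe_zero vIm_zero by simp
    then show ?thesis unfolding dd by simp
  qed
  define W where "W = vRe ` V"
  have sW: "subspace W" unfolding subspace_def W_def
  proof (intro conjI ballI allI)
    show "0 \<in> vRe ` V" using V0 vRe_zero by (metis image_eqI)
  next
    fix x y assume "x \<in> vRe ` V" "y \<in> vRe ` V"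
    then obtain u v where "u \<in> V" "v \<in> V" "x = vRe u" "y = vRe v" by auto
    then show "x + y \<in> vRe ` V" using V_add vRe_add by (metis image_eqI)
  next
    fix r :: real and x assume "x \<in> vRe ` V"
    then obtain u where "u \<in> V" "x = vRe u" by auto
    then show "r *\<^sub>R x \<in> vRe ` V" using V_cm vRe_cm_real by (metis image_eqI)
  qed
  obtain B where B: "B \<subseteq> W" "independent B" "W \<subseteq> span B" "card B = dim W"
    by (rule basis_exists[of W])
  define f where "f b = vRe (cm \<i> (SOME u. u \<in> V \<and> vRe u = b))" for b
  obtain J where J: "linear J" "\<forall>x\<in>B. J x = f x"
    using linear_independent_extend[OF B(2), of f] by (elim exE conjE)
  define P where "P x \<longleftrightarrow> x \<in> W \<and> (\<forall>u\<in>V. vRe u = x \<longrightarrow> J x = vRe (cm \<i> u))" for x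
  have P0: "P 0" unfolding P_def
  proof (intro conjI ballI impI)
    show "0 \<in> W" using sW subspace_0 by blast
    fix u assume "u \<in> V" "vRe u = 0"
    then have "u = 0" using reinj[of u 0] V0 vRe_zero by simp
    then show "J 0 = vRe (cm \<i> u)" using J(1) linear_0 by (simp add: vRe_cm_i vIm_zero)
  qed
  have Padd: "P (x + y)" if x: "P x" and y: "P y" for x y
    unfolding P_def
  proof (intro conjI ballI impI)
    show "x + y \<in> W" using x y sW subspace_add unfolding P_def by blast
    fix u assume u: "u \<in> V" "vRe u = x + y"
    obtain u1 where u1: "u1 \<in> V" "vRe u1 = x" using x unfolding W_def P_def by auto
    obtain u2 where u2: "u2 \<in> V" "vRe u2 = y" using y unfolding W_def P_def by auto
    have "u1 + u2 \<in> V" using V_add u1 u2 by blast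
    moreover have "vRe u = vRe (u1 + u2)" using u u1 u2 by (simp add: vRe_add)
    ultimately have "u = u1 + u2" using reinj u by blast
    moreover have "J x = vRe (cm \<i> u1)" "J y = vRe (cm \<i> u2)"
      using x y u1 u2 unfolding P_def by auto
    ultimately show "J (x + y) = vRe (cm \<i> u)"
      using J(1) by (simp add: linear_add cm_add vRe_add)
  qed
  have Pscale: "P (r *\<^sub>R x)" if x: "P x" for x r
    unfolding P_def
  proof (intro conjI ballI impI)
    show "r *\<^sub>R x \<in> W" using x sW subspace_scale unfolding P_def by blast
    fix u assume u: "u \<in> V" "vRe u = r *\<^sub>R x"
    obtain u1 where u1: "u1 \<in> V" "vRe u1 = x" using x unfolding W_def P_def by auto
    have "cm (complex_of_real r) u1 \<in> V" using V_cm u1 by blast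
    moreover have "vRe u = vRe (cm (complex_of_real r) u1)" using u u1 by (simp add: vRe_cm_real)
    ultimately have "u = cm (complex_of_real r) u1" using reinj u by blast
    moreover have "J x = vRe (cm \<i> u1)" using x u1 unfolding P_def by auto
    moreover have "vRe (cm \<i> (cm (complex_of_real r) u)) = r *\<^sub>R vRe (cm \<i> u)" for u
      by (simp add: vRe_def cm_def vec_eq_iff)
    moreover have "cm \<i> (cm (complex_of_real r) u1) = cm (complex_of_real r) (cm \<i> u1)"
      by (simp add: cm_cm mult.commute)
    ultimately show "J (r *\<^sub>R x) = vRe (cm \<i> u)"
      using J(1) by (simp add: linear_scale vRe_cm_real)
  qed
  have sP: "subspace (Collect P)" unfolding subspace_def using P0 Padd Pscale by auto
  have PBase: "P b" if "b \<in> B" for b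
  proof -
    have bW: "b \<in> W" using that B(1) by blast
    then have ex: "\<exists>u. u \<in> V \<and> vRe u = b" unfolding W_def by auto
    define u0 where "u0 = (SOME u. u \<in> V \<and> vRe u = b)"
    have u0: "u0 \<in> V" "vRe u0 = b" using someI_ex[OF ex] unfolding u0_def by auto
    have "J b = vRe (cm \<i> u0)" using J(2) that unfolding f_def u0_def by simp
    moreover have "u = u0" if "u \<in> V" "vRe u = b" for u using reinj[OF that(1) u0(1)] that u0 by simp
    ultimately show ?thesis unfolding P_def using bW by auto
  qed
  have PB: "P x" if "x \<in> span B" for x
    using span_induct[OF that, of P] sP PBase by simp
  have key: "J (vRe u) = vRe (cm \<i> u)" if "u \<in> V" for u
  proof -
    have "vRe u \<in> span B" using that B(3) unfolding W_def by blast
    then show ?thesis using PB that unfolding P_def by blast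
  qed
  have hx_eq: "hx h z = vRe (cm 2 (dz h z))" for z
    using dz_re[of h z] by (simp add: vRe_def cm_def vec_eq_iff mult.commute)
  have hy_eq: "hy h z = vRe (cm \<i> (cm 2 (dz h z)))" for z
    using dz_im[of h z] by (simp add: vRe_def vIm_def cm_def vec_eq_iff mult.commute)
  have hxW: "hx h z \<in> W" for z unfolding hx_eq W_def using phiV V_cm by blast
  have hyW: "hy h z \<in> W" for z unfolding hy_eq W_def using phiV V_cm by blast
  have hW: "h z - h 0 \<in> W" for z by (rule const_in_W[OF diff sW hxW hyW])
  have JW: "J ` W \<subseteq> W" unfolding W_def using key V_cm by auto
  have JJ: "\<forall>w\<in>W. J (J w) = - w"
  proof
    fix w assume "w \<in> W"
    then obtain u where u: "u \<in> V" "w = vRe u" unfolding W_def by auto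
    have "J (J w) = J (vRe (cm \<i> u))" using key u by simp
    also have "\<dots> = vRe (cm \<i> (cm \<i> u))" using key V_cm u by blast
    also have "\<dots> = - w" using u by (simp add: vRe_def cm_def vec_eq_iff)
    finally show "J (J w) = - w" .
  qed
  have Jinner: "\<forall>u\<in>W. \<forall>v\<in>W. J u \<bullet> J v = u \<bullet> v"
  proof (intro ballI)
    fix u v assume "u \<in> W" "v \<in> W"
    then obtain a b where a: "a \<in> V" "u = vRe a" and b: "b \<in> V" "v = vRe b"
      unfolding W_def by auto
    have "gC a b = 0" using isoV a b by blast
    then have "vRe a \<bullet> vRe b = vIm a \<bullet> vIm b" unfolding gC_real by (simp add: complex_eq_iff)
    then show "J u \<bullet> J v = u \<bullet> v" using a b key by (simp add: vRe_cm_i)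
  qed
  have Jhx: "J (hx h z) = hy h z" for z unfolding hx_eq hy_eq using key phiV V_cm by blast
  have Jhy: "J (hy h z) = - hx h z" for z
  proof -
    have "J (hy h z) = vRe (cm \<i> (cm \<i> (cm 2 (dz h z))))" unfolding hy_eq using key phiV V_cm by blast
    also have "\<dots> = - hx h z" unfolding hx_eq by (simp add: vRe_def cm_def vec_eq_iff)
    finally show ?thesis .
  qed
  have ev: "even (dim W)" by (rule even_dim_cs[OF sW J(1) JW JJ Jinner])
  show ?thesis unfolding holomorphic_up_to_rigid_motion_def
    apply (rule exI[of _ "h 0"], rule exI[of _ W], rule exI[of _ J])
    apply (intro conjI allI)
            apply (rule sW)
           apply (rule ev)
          apply (rule hW)
         apply (rule J(1))
        apply (rule JW)
       apply (rule JJ)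
      apply (rule Jinner)
     apply (rule Jhx)
    apply (rule Jhy)
    done
qed



lemma lincomp:
  fixes J :: "real^'n \<Rightarrow> real^'n"
  assumes "linear J"
  shows "J x $ k = (\<Sum>i\<in>UNIV. x $ i * J (axis i 1) $ k)"
proof -
  have "Vector_Spaces.linear (*s) (*s) J" using assms
    by (simp add: scalar_mult_eq_scaleR[abs_def] linear_def)
  then show ?thesis by (rule Cartesian_Space.linear_componentwise)
qed

lemma gC_realvec: "gC (\<chi> i. complex_of_real (v $ i)) u = Complex (v \<bullet> vRe u) (v \<bullet> vIm u)"
  unfolding gC_def vRe_def vIm_def inner_vec_def
  by (simp add: complex_eq_iff Re_sum Im_sum)

lemma gC_Jvec:
  fixes J :: "real^'n \<Rightarrow> real^'n"
  assumes "linear J"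
  shows "gC (\<chi> i. complex_of_real (J (axis i 1) $ k) - (if i = k then \<i> else 0)) u
    = Complex (J (vRe u) $ k + vIm u $ k) (J (vIm u) $ k - vRe u $ k)"
proof -
  have "gC (\<chi> i. complex_of_real (J (axis i 1) $ k) - (if i = k then \<i> else 0)) u
     = (\<Sum>i\<in>UNIV. complex_of_real (J (axis i 1) $ k) * u $ i) - (\<Sum>i\<in>UNIV. (if i = k then \<i> else 0) * u $ i)"
    unfolding gC_def by (simp add: left_diff_distrib sum_subtractf)
  also have "\<dots> = (\<Sum>i\<in>UNIV. complex_of_real (J (axis i 1) $ k) * u $ i) - \<i> * u $ k"
  proof -
    have eq: "(\<lambda>i. (if i = k then \<i> else 0) * u $ i) = (\<lambda>i. if i = k then \<i> * u $ k else 0)"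
      by auto
    show ?thesis unfolding eq by simp
  qed
  finally show ?thesis
    using lincomp[OF assms, of "vRe u" k] lincomp[OF assms, of "vIm u" k]
    by (simp add: complex_eq_iff Re_sum Im_sum vRe_def vIm_def mult.commute)
qed

lemma forward:
  fixes h :: "complex \<Rightarrow> real ^ 'n" and c :: "nat \<Rightarrow> complex ^ 'n"
  assumes diff: "\<And>z. h differentiable (at z)"
    and sm: "\<And>z i. (\<lambda>j. c j $ i * z ^ j) sums (dz h z $ i)"
    and hol: "holomorphic_up_to_rigid_motion h"
  shows "gC (c m) (c k) = 0"
proof -
  obtain b W J where sW: "subspace W" and hb: "\<And>z. h z - b \<in> W" and lin: "linear J"
    and JW: "J ` W \<subseteq> W" and JJ: "\<forall>w\<in>W. J (J w) = - w"
    and Jin: "\<forall>u\<in>W. \<forall>v\<in>W. J u \<bullet> J v = u \<bullet> v"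
    and Jh: "\<And>z. J (hx h z) = hy h z \<and> J (hy h z) = - hx h z"
    using hol unfolding holomorphic_up_to_rigid_motion_def by blast
  have hxW: "hx h z \<in> W" and hyW: "hy h z \<in> W" for z
    using deriv_in_W[OF diff sW hb] by auto
  have transfer: "gC w (c j) = 0" if "\<And>z. gC w (dz h z) = 0" for w j
  proof (rule powser_coeffs_zero)
    fix z
    have "(\<lambda>j. gC w (c j) * z ^ j) sums (gC w (dz h z))" by (rule sums_gC) (rule sm)
    then show "(\<lambda>j. gC w (c j) * z ^ j) sums 0" using that by simp
  qed
  have ReW: "vRe (c j) \<in> W" and ImW: "vIm (c j) \<in> W" for j
  proof -
    have "v \<bullet> vRe (c j) = 0 \<and> v \<bullet> vIm (c j) = 0" if v: "\<forall>x\<in>W. v \<bullet> x = 0" for v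
    proof -
      have "gC (\<chi> i. complex_of_real (v $ i)) (dz h z) = 0" for z
      proof -
        have "v \<bullet> vRe (dz h z) = 0" unfolding dz_re using v hxW by simp
        moreover have "v \<bullet> vIm (dz h z) = 0" unfolding dz_im using v hyW by simp
        ultimately show ?thesis by (simp add: gC_realvec complex_eq_iff)
      qed
      then have "gC (\<chi> i. complex_of_real (v $ i)) (c j) = 0" by (rule transfer)
      then show ?thesis by (simp add: gC_realvec complex_eq_iff)
    qed
    then show "vRe (c j) \<in> W" "vIm (c j) \<in> W" using orth_mem[OF sW] by blast+
  qed
  have JRe: "J (vRe (c j)) = - vIm (c j)" for j
  proof -
    have "J (vRe (c j)) $ q + vIm (c j) $ q = 0" for q
    proof -
      have "gC (\<chi> i. complex_of_real (J (axis i 1) $ q) - (if i = q then \<i> else 0)) (dz h z) = 0" for z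
      proof -
        have "J (vRe (dz h z)) = - vIm (dz h z)" unfolding dz_re dz_im
          using lin Jh by (simp add: linear_scale)
        moreover have "J (vIm (dz h z)) = vRe (dz h z)" unfolding dz_re dz_im
          using lin Jh by (simp add: linear_scale linear_neg)
        ultimately show ?thesis by (simp add: gC_Jvec[OF lin] complex_eq_iff)
      qed
      then have "gC (\<chi> i. complex_of_real (J (axis i 1) $ q) - (if i = q then \<i> else 0)) (c j) = 0"
        by (rule transfer)
      then show ?thesis by (simp add: gC_Jvec[OF lin] complex_eq_iff)
    qed
    then show ?thesis by (simp add: vec_eq_iff add_eq_0_iff)
  qed
  define a where "a = vRe (c m)"
  define e where "e = vRe (c k)"
  have aW: "a \<in> W" and eW: "e \<in> W" unfolding a_def e_def using ReW by auto
  have Ja: "J a \<in> W" using JW aW by auto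
  have 1: "J a \<bullet> J e = a \<bullet> e" using Jin aW eW by blast
  have "J (J a) \<bullet> J e = J a \<bullet> e" using Jin Ja eW by blast
  then have 2: "J a \<bullet> e = - (a \<bullet> J e)" using JJ aW by simp
  have Im_m: "vIm (c m) = - J a" using JRe unfolding a_def by simp
  have Im_k: "vIm (c k) = - J e" using JRe unfolding e_def by simp
  have "gC (c m) (c k) = Complex (a \<bullet> e - (- J a) \<bullet> (- J e)) (a \<bullet> (- J e) + (- J a) \<bullet> e)"
    unfolding gC_real by (simp only: a_def[symmetric] e_def[symmetric] Im_m Im_k)
  also have "\<dots> = 0" using 1 2 by (simp add: complex_eq_iff)
  finally show ?thesis .
qed


theorem theorem2p1:
  fixes h :: "complex \<Rightarrow> real ^ 'n" and c :: "nat \<Rightarrow> complex ^ 'n"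
  assumes "branched_minimal_immersion h"
    and "\<And>z i. (\<lambda>j. c j $ i * z ^ j) sums (dz h z $ i)"
  shows "holomorphic_up_to_rigid_motion h \<longleftrightarrow> (\<forall>m k. gC (c m) (c k) = 0)"
proof -
  have diff: "\<And>z. h differentiable (at z)"
  proof -
    fix z
    have "iter_pd [] h differentiable (at z)"
      using assms(1) unfolding branched_minimal_immersion_def smooth_map_def by blast
    then show "h differentiable (at z)" by simp
  qed
  show ?thesis using forward[OF diff assms(2)] backward[OF diff assms(2)] by blast
qed

end
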